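(* Let $G$ be a connected (bull, chair)-free graph. Then $\mathsf{lpt}(G) \le 5$.
   Context: All graphs are finite and simple. A chair is the graph obtained by subdividing one edge of the claw $K_{1,3}$ exactly once. A bull is the graph obtained from a four-vertex path by adding a vertex adjacent to exactly the two middle vertices of the path. A graph is (bull, chair)-free if it has no induced subgraph isomorphic to a bull or a chair. A longest path of a connected graph $G$ is a path of maximum length in $G$; a longest path transversal is a set of vertices meeting every longest path; $\mathsf{lpt}(G)$ is the minimum cardinality of a longest path transversal of $G$. *)

theory Defs
  imports Main
begin

definition simple_graph :: "'a set \<Rightarrow> ('a \<Rightarrow> 'a \<Rightarrow> bool) \<Rightarrow> bool" where
  "simple_graph V E \<longleftrightarrow> finite V \<and> (\<forall>u v. E u v \<longrightarrow> E v u)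
     \<and> (\<forall>v. \<not> E v v) \<and> (\<forall>u v. E u v \<longrightarrow> u \<in> V \<and> v \<in> V)"

definition connected_graph :: "'a set \<Rightarrow> ('a \<Rightarrow> 'a \<Rightarrow> bool) \<Rightarrow> bool" where
  "connected_graph V E \<longleftrightarrow> V \<noteq> {} \<and> (\<forall>u\<in>V. \<forall>v\<in>V. E\<^sup>*\<^sup>* u v)"

definition has_induced :: "'a set \<Rightarrow> ('a \<Rightarrow> 'a \<Rightarrow> bool) \<Rightarrow> nat \<Rightarrow> (nat \<Rightarrow> nat \<Rightarrow> bool) \<Rightarrow> bool" where
  "has_induced V E n H \<longleftrightarrow> (\<exists>f. inj_on f {..<n} \<and> f ` {..<n} \<subseteq> V \<and>
      (\<forall>i<n. \<forall>j<n. E (f i) (f j) \<longleftrightarrow> H i j))"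

text \<open>Bull: path 0-1-2-3 plus vertex 4 adjacent to 1 and 2.\<close>
definition bull_adj :: "nat \<Rightarrow> nat \<Rightarrow> bool" where
  "bull_adj i j \<longleftrightarrow> {i, j} \<in> {{0,1},{1,2},{2,3},{1,4},{2,4}}"

text \<open>Chair: claw with centre 0 and leaves 1,2,3, edge 0-3 subdivided by 4.\<close>
definition chair_adj :: "nat \<Rightarrow> nat \<Rightarrow> bool" where
  "chair_adj i j \<longleftrightarrow> {i, j} \<in> {{0,1},{0,2},{0,4},{4,3}}"

definition bull_chair_free :: "'a set \<Rightarrow> ('a \<Rightarrow> 'a \<Rightarrow> bool) \<Rightarrow> bool" where
  "bull_chair_free V E \<longleftrightarrow> \<not> has_induced V E 5 bull_adj \<and> \<not> has_induced V E 5 chair_adj"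

definition is_path :: "'a set \<Rightarrow> ('a \<Rightarrow> 'a \<Rightarrow> bool) \<Rightarrow> 'a list \<Rightarrow> bool" where
  "is_path V E p \<longleftrightarrow> p \<noteq> [] \<and> distinct p \<and> set p \<subseteq> V \<and>
     (\<forall>i. Suc i < length p \<longrightarrow> E (p ! i) (p ! Suc i))"

definition longest_path :: "'a set \<Rightarrow> ('a \<Rightarrow> 'a \<Rightarrow> bool) \<Rightarrow> 'a list \<Rightarrow> bool" where
  "longest_path V E p \<longleftrightarrow> is_path V E p \<and> (\<forall>q. is_path V E q \<longrightarrow> length q \<le> length p)"

definition lp_transversal :: "'a set \<Rightarrow> ('a \<Rightarrow> 'a \<Rightarrow> bool) \<Rightarrow> 'a set \<Rightarrow> bool" where
  "lp_transversal V E T \<longleftrightarrow> T \<subseteq> V \<and> (\<forall>p. longest_path V E p \<longrightarrow> set p \<inter> T \<noteq> {})"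

definition lpt :: "'a set \<Rightarrow> ('a \<Rightarrow> 'a \<Rightarrow> bool) \<Rightarrow> nat" where
  "lpt V E = (LEAST k. \<exists>T. lp_transversal V E T \<and> card T = k)"

end

theory Submission
  imports Defs
begin

fun walk :: "('a \<Rightarrow> 'a \<Rightarrow> bool) \<Rightarrow> 'a list \<Rightarrow> bool" where
  "walk E [] = True"
| "walk E [x] = True"
| "walk E (x # y # xs) = (E x y \<and> walk E (y # xs))"

lemma walk_nth: "walk E p \<longleftrightarrow> (\<forall>i. Suc i < length p \<longrightarrow> E (p ! i) (p ! Suc i))"
proof (induction E p rule: walk.induct)
  case (3 E x y xs)
  show ?case
  proof
    assume "walk E (x # y # xs)"
    then show "\<forall>i. Suc i < length (x # y # xs) \<longrightarrow> E ((x # y # xs) ! i) ((x # y # xs) ! Suc i)"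
      using 3 by (auto simp: nth_Cons split: nat.splits)
  next
    assume h: "\<forall>i. Suc i < length (x # y # xs) \<longrightarrow> E ((x # y # xs) ! i) ((x # y # xs) ! Suc i)"
    have "E x y" using h[rule_format, of 0] by simp
    moreover have "\<forall>i. Suc i < length (y # xs) \<longrightarrow> E ((y # xs) ! i) ((y # xs) ! Suc i)"
      using h by (metis Suc_less_eq length_Cons nth_Cons_Suc)
    ultimately show "walk E (x # y # xs)" using 3 by simp
  qed
qed auto

lemma walk_append: "walk E (xs @ ys) \<longleftrightarrow> walk E xs \<and> walk E ys \<and> (xs \<noteq> [] \<and> ys \<noteq> [] \<longrightarrow> E (last xs) (hd ys))"
  by (induction E xs rule: walk.induct; cases ys) auto

lemma walk_Cons: "walk E (x # xs) \<longleftrightarrow> walk E xs \<and> (xs \<noteq> [] \<longrightarrow> E x (hd xs))"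
  by (cases xs) auto

lemma walk_clique: "\<forall>x\<in>set xs. \<forall>y\<in>set xs. x \<noteq> y \<longrightarrow> E x y \<Longrightarrow> distinct xs \<Longrightarrow> walk E xs"
proof (induction xs)
  case (Cons a xs)
  then show ?case by (cases xs) auto
qed simp

lemma is_path_walk: "is_path V E p \<longleftrightarrow> p \<noteq> [] \<and> distinct p \<and> set p \<subseteq> V \<and> walk E p"
  unfolding is_path_def walk_nth by auto

lemma walk_rev: "(\<And>u v. E u v \<Longrightarrow> E v u) \<Longrightarrow> walk E xs \<Longrightarrow> walk E (rev xs)"
proof (induction xs)
  case (Cons a xs)
  then show ?case by (auto simp: walk_append walk_Cons last_rev hd_rev)
qed simp

lemma lpt_le: "lp_transversal V E T \<Longrightarrow> lpt V E \<le> card T"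
  unfolding lpt_def by (rule Least_le) auto

locale bcg =
  fixes V :: "'a set" and E :: "'a \<Rightarrow> 'a \<Rightarrow> bool"
  assumes sg: "simple_graph V E" and conn: "connected_graph V E" and bcf: "bull_chair_free V E"
begin

lemma sym: "E u v \<Longrightarrow> E v u" using sg unfolding simple_graph_def by blast
lemma irr: "\<not> E v v" using sg unfolding simple_graph_def by blast
lemma inV1: "E u v \<Longrightarrow> u \<in> V" using sg unfolding simple_graph_def by blast
lemma inV2: "E u v \<Longrightarrow> v \<in> V" using sg unfolding simple_graph_def by blast
lemma finV: "finite V" using sg unfolding simple_graph_def by blast
lemma Vne: "V \<noteq> {}" using conn unfolding connected_graph_def by blast

lemma symE: "E u v \<longleftrightarrow> E v u" using sym by blast

lemma all5: "(\<forall>i<(5::nat). P i) \<longleftrightarrow> P 0 \<and> P 1 \<and> P 2 \<and> P 3 \<and> P 4"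
proof -
  have "{..<(5::nat)} = {0,1,2,3,4}" by auto
  then have "(\<forall>i<(5::nat). P i) \<longleftrightarrow> (\<forall>i\<in>{0,1,2,3,4}. P i)" by (metis lessThan_iff)
  then show ?thesis by simp
qed

lemma has_induced_list:
  assumes "length xs = n" "distinct xs" "set xs \<subseteq> V" "\<forall>i<n. \<forall>j<n. E (xs!i) (xs!j) \<longleftrightarrow> H i j"
  shows "has_induced V E n H"
  unfolding has_induced_def
proof (intro exI conjI)
  show "inj_on (\<lambda>i. xs ! i) {..<n}" using assms(1,2) by (auto simp: inj_on_def nth_eq_iff_index_eq)
  show "(\<lambda>i. xs ! i) ` {..<n} \<subseteq> V" using assms(1,3) by auto
  show "\<forall>i<n. \<forall>j<n. E (xs ! i) (xs ! j) = H i j" using assms(4) .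
qed

lemma no_chair:
  assumes "E c l1" "E c l2" "E c l3" "E l3 t" "\<not> E l1 l2" "\<not> E l1 l3" "\<not> E l2 l3"
    "\<not> E t c" "\<not> E t l1" "\<not> E t l2" "l1 \<noteq> l2" "l1 \<noteq> l3" "l2 \<noteq> l3"
  shows False
proof -
  have nodes: "c \<in> V" "l1 \<in> V" "l2 \<in> V" "l3 \<in> V" "t \<in> V"
    using assms inV1 inV2 by blast+
  have d: "c \<noteq> l1" "c \<noteq> l2" "c \<noteq> l3" "c \<noteq> t" "l1 \<noteq> t" "l2 \<noteq> t" "l3 \<noteq> t"
    using assms irr sym by metis+
  have s: "E l1 c" "E l2 c" "E l3 c" "E t l3" "\<not> E l2 l1" "\<not> E l3 l1" "\<not> E l3 l2"
    "\<not> E c t" "\<not> E l1 t" "\<not> E l2 t"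
    using assms sym by blast+
  have ir: "\<not> E c c" "\<not> E l1 l1" "\<not> E l2 l2" "\<not> E l3 l3" "\<not> E t t" using irr by auto
  have tab: "chair_adj 0 1" "chair_adj 0 2" "chair_adj 0 4" "chair_adj 4 3"
    "chair_adj 1 0" "chair_adj 2 0" "chair_adj 4 0" "chair_adj 3 4"
    "\<not>chair_adj 0 0" "\<not>chair_adj 1 1" "\<not>chair_adj 2 2" "\<not>chair_adj 3 3" "\<not>chair_adj 4 4"
    "\<not>chair_adj 0 3" "\<not>chair_adj 3 0" "\<not>chair_adj 1 2" "\<not>chair_adj 2 1"
    "\<not>chair_adj 1 3" "\<not>chair_adj 3 1" "\<not>chair_adj 1 4" "\<not>chair_adj 4 1"
    "\<not>chair_adj 2 3" "\<not>chair_adj 3 2" "\<not>chair_adj 2 4" "\<not>chair_adj 4 2"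
    by (simp_all add: chair_adj_def doubleton_eq_iff)
  have "has_induced V E 5 chair_adj"
    by (rule has_induced_list[where xs="[c, l1, l2, t, l3]"])
      (use nodes d assms s ir tab in \<open>simp_all add: all5\<close>)
  then show False using bcf unfolding bull_chair_free_def by blast
qed

lemma no_bull:
  assumes "E t1 t2" "E t2 t3" "E t1 t3" "E p1 t1" "E p2 t2"
    "\<not> E p1 t2" "\<not> E p1 t3" "\<not> E p2 t1" "\<not> E p2 t3" "\<not> E p1 p2"
  shows False
proof -
  have nodes: "p1 \<in> V" "t1 \<in> V" "t2 \<in> V" "p2 \<in> V" "t3 \<in> V"
    using assms inV1 inV2 by blast+
  have d: "p1 \<noteq> t1" "p1 \<noteq> t2" "p1 \<noteq> p2" "p1 \<noteq> t3" "t1 \<noteq> t2" "t1 \<noteq> p2" "t1 \<noteq> t3"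
     "t2 \<noteq> p2" "t2 \<noteq> t3" "p2 \<noteq> t3"
    using assms irr sym by metis+
  have s: "E t2 t1" "E t3 t2" "E t3 t1" "E t1 p1" "E t2 p2"
    "\<not> E t2 p1" "\<not> E t3 p1" "\<not> E t1 p2" "\<not> E t3 p2" "\<not> E p2 p1"
    using assms sym by blast+
  have ir: "\<not> E p1 p1" "\<not> E t1 t1" "\<not> E t2 t2" "\<not> E p2 p2" "\<not> E t3 t3" using irr by auto
  have tab: "bull_adj 0 1" "bull_adj 1 2" "bull_adj 2 3" "bull_adj 1 4" "bull_adj 2 4"
    "bull_adj 1 0" "bull_adj 2 1" "bull_adj 3 2" "bull_adj 4 1" "bull_adj 4 2"
    "\<not>bull_adj 0 0" "\<not>bull_adj 1 1" "\<not>bull_adj 2 2" "\<not>bull_adj 3 3" "\<not>bull_adj 4 4"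
    "\<not>bull_adj 0 2" "\<not>bull_adj 2 0" "\<not>bull_adj 0 3" "\<not>bull_adj 3 0" "\<not>bull_adj 0 4" "\<not>bull_adj 4 0"
    "\<not>bull_adj 1 3" "\<not>bull_adj 3 1" "\<not>bull_adj 3 4" "\<not>bull_adj 4 3"
    by (simp_all add: bull_adj_def doubleton_eq_iff)
  have "has_induced V E 5 bull_adj"
    by (rule has_induced_list[where xs="[p1, t1, t2, p2, t3]"])
      (use nodes d assms s ir tab in \<open>simp_all add: all5\<close>)
  then show False using bcf unfolding bull_chair_free_def by blast
qed

lemma dom_transversal:
  assumes "D \<subseteq> V" "\<forall>u\<in>V. u \<in> D \<or> (\<exists>d\<in>D. E u d)"
  shows "lp_transversal V E D"
  unfolding lp_transversal_def
proof (intro conjI allI impI assms(1))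
  fix p assume lp: "longest_path V E p"
  show "set p \<inter> D \<noteq> {}"
  proof
    assume dis: "set p \<inter> D = {}"
    have pp: "is_path V E p" and mx: "\<forall>q. is_path V E q \<longrightarrow> length q \<le> length p"
      using lp unfolding longest_path_def by auto
    have ne: "p \<noteq> []" and dp: "distinct p" and sp: "set p \<subseteq> V" and wp: "walk E p"
      using pp(1) by (simp_all add: is_path_walk)
    have "hd p \<in> V" using ne sp by auto
    moreover have "hd p \<notin> D" using dis ne by (auto simp: hd_in_set disjoint_iff)
    ultimately obtain d where "d \<in> D" "E (hd p) d" using assms(2) by blast
    then have "is_path V E (d # p)"
      using ne dp sp wp dis assms(1) sym unfolding is_path_walk
      by (auto simp: walk_Cons)
    then show False using mx by fastforce
  qed
qed

lemma dom_lpt: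
  assumes "D \<subseteq> V" "\<forall>u\<in>V. u \<in> D \<or> (\<exists>d\<in>D. E u d)" "card D \<le> 5"
  shows "lpt V E \<le> 5"
  using lpt_le[OF dom_transversal[OF assms(1,2)]] assms(3) by simp

lemma ham_lpt:
  assumes "is_path V E h" "set h = V"
  shows "lpt V E \<le> 5"
proof -
  obtain x where x: "x \<in> V" using Vne by blast
  have "lp_transversal V E {x}"
    unfolding lp_transversal_def
  proof (intro conjI allI impI)
    show "{x} \<subseteq> V" using x by simp
    fix p assume lp: "longest_path V E p"
    then have pp: "is_path V E p" "length h \<le> length p" using assms(1)
      unfolding longest_path_def by auto
    then have "distinct p" "set p \<subseteq> V" unfolding is_path_def by auto
    moreover have "distinct h" using assms(1) unfolding is_path_def by auto
    ultimately have "card (set p) \<ge> card V" using pp(2) assms(2)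
      by (metis distinct_card)
    then have "set p = V" using \<open>set p \<subseteq> V\<close> finV by (simp add: card_seteq)
    then show "set p \<inter> {x} \<noteq> {}" using x by auto
  qed
  then show ?thesis using lpt_le[of V E "{x}"] by simp
qed

end

context bcg
begin

definition indep3 where
  "indep3 a b c \<longleftrightarrow> a \<in> V \<and> b \<in> V \<and> c \<in> V \<and> a \<noteq> b \<and> a \<noteq> c \<and> b \<noteq> c \<and> \<not> E a b \<and> \<not> E a c \<and> \<not> E b c"

definition T0 where "T0 I u \<longleftrightarrow> u \<in> V \<and> u \<notin> I \<and> (\<forall>x\<in>I. \<not> E u x)"
definition Full where "Full I f \<longleftrightarrow> f \<in> V \<and> (\<forall>x\<in>I. E f x)"

lemma indep3_perm:
  assumes "indep3 a b c"
  shows "indep3 a c b" "indep3 b a c" "indep3 b c a" "indep3 c a b" "indep3 c b a"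
  using assms unfolding indep3_def by (auto simp: symE)

lemma L1:
  assumes "indep3 a b c" "I = {a,b,c}" "Full I f" "E t a" "\<not> E t b" "\<not> E t c"
  shows "E t f"
proof (rule ccontr)
  assume "\<not> E t f"
  show False
    by (rule no_chair[of f b c a t]) (use assms \<open>\<not> E t f\<close> in \<open>auto simp: indep3_def Full_def symE\<close>)
qed

lemma L2:
  assumes "indep3 a b c" "I = {a,b,c}" "Full I f" "T0 I z" "E z y" "E y a" "\<not> E y b" "\<not> E y c"
  shows "E z f"
proof (rule ccontr)
  assume nz: "\<not> E z f"
  have yf: "E y f" using L1[OF assms(1,2,3,6,7,8)] .
  have "y \<noteq> b" "y \<noteq> c" using assms(6,7,8) assms(1) unfolding indep3_def by (auto simp: symE)
  then show False
    by (intro no_chair[of f b c y z]) (use assms nz yf in \<open>auto simp: indep3_def Full_def T0_def symE\<close>)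
qed

lemma L3:
  assumes "indep3 a b c" "I = {a,b,c}" "Full I f" "T0 I z" "E z f" "T0 I u" "E z u"
  shows "E u f"
proof (rule ccontr)
  assume nu: "\<not> E u f"
  show False
    by (intro no_chair[of f a b z u]) (use assms nu in \<open>auto simp: indep3_def Full_def T0_def symE\<close>)
qed

lemma L4:
  assumes "indep3 a b c" "I = {a,b,c}" "E s a" "E s b" "\<not> E s c" "T0 I z" "E s z" "Full I f" "\<not> E z f"
  shows "\<not> E s f"
proof
  assume sf: "E s f"
  show False
    by (rule no_bull[of s f a z c]) (use assms sf in \<open>auto simp: indep3_def Full_def T0_def symE\<close>)
qed

lemma L5:
  assumes "indep3 a b c" "I = {a,b,c}" "E s a" "E s b" "T0 I z" "E s z" "T0 I u" "E z u"
  shows "E u s"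
proof (rule ccontr)
  assume nu: "\<not> E u s"
  show False
    by (intro no_chair[of s a b z u]) (use assms nu in \<open>auto simp: indep3_def Full_def T0_def symE\<close>)
qed

lemma crossing:
  assumes "U \<subseteq> V" "x \<in> U" "w \<in> V" "w \<notin> U"
  shows "\<exists>u\<in>U. \<exists>y\<in>V. y \<notin> U \<and> E u y"
proof -
  have "E\<^sup>*\<^sup>* x w" using conn assms unfolding connected_graph_def by blast
  then show ?thesis using assms(4)
  proof (induction rule: rtranclp_induct)
    case base
    then show ?case using assms(2) by simp
  next
    case (step y z)
    show ?case
    proof (cases "y \<in> U")
      case True
      then show ?thesis using step inV2 by blast
    next
      case False
      then show ?thesis using step by blast
    qed
  qed
qed

lemma card_lt_V: "A \<subseteq> V \<Longrightarrow> card A < Suc (card V)"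
  using card_mono[OF finV] by (simp add: le_imp_less_Suc)

end

context bcg
begin

lemma claw_case:
  assumes ind: "indep3 a b c" and va: "E v a" and vb: "E v b" and vc: "E v c"
  shows "lpt V E \<le> 5"
proof -
  define I where "I = {a,b,c}"
  have aV: "a \<in> V" "b \<in> V" "c \<in> V" using ind unfolding indep3_def by auto
  have perms: "indep3 a b c" "indep3 a c b" "indep3 b a c" "indep3 b c a" "indep3 c a b" "indep3 c b a"
    using indep3_perm[OF ind] ind by simp_all
  have Ieq: "I = {a,b,c}" "I = {a,c,b}" "I = {b,a,c}" "I = {b,c,a}" "I = {c,a,b}" "I = {c,b,a}"
    unfolding I_def by auto
  define F where "F = {f. Full I f}"
  define T0r where "T0r = {z. T0 I z \<and> (\<forall>f\<in>F. \<not> E z f)}"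
  define T0F where "T0F = {z. T0 I z \<and> (\<exists>f\<in>F. E z f)}"
  define two where "two s \<longleftrightarrow> s \<in> V \<and> (\<exists>g\<in>I. \<forall>x\<in>I. E s x \<longleftrightarrow> x \<noteq> g)" for s
  define one where "one s \<longleftrightarrow> s \<in> V \<and> (\<exists>g\<in>I. \<forall>x\<in>I. E s x \<longleftrightarrow> x = g)" for s
  have vF: "v \<in> F" unfolding F_def Full_def I_def using va vb vc inV1 by auto
  have T0rV: "T0r \<subseteq> V" "T0F \<subseteq> V" unfolding T0r_def T0F_def T0_def by auto
  have dist: "a \<noteq> b" "a \<noteq> c" "b \<noteq> c" using ind unfolding indep3_def by auto
  have classify: "y \<in> I \<or> T0 I y \<or> one y \<or> two y \<or> Full I y" if "y \<in> V" for y
    using that dist unfolding T0_def one_def two_def Full_def I_def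
    by (cases "E y a"; cases "E y b"; cases "E y c") auto

  have two_cases: "P" if a1: "two s" and a2: "\<And>x y z. indep3 x y z \<Longrightarrow> I = {x,y,z} \<Longrightarrow> E s x \<Longrightarrow> E s y \<Longrightarrow> \<not> E s z \<Longrightarrow> P" for s P
  proof -
    obtain g where g: "g \<in> I" "\<forall>x\<in>I. E s x \<longleftrightarrow> x \<noteq> g" using a1 unfolding two_def by blast
    have "g = a \<or> g = b \<or> g = c" using g(1) unfolding I_def by auto
    then show P
    proof (elim disjE)
      assume "g = a" then show P using a2[OF perms(4) Ieq(4)] g ind unfolding I_def indep3_def by auto
    next
      assume "g = b" then show P using a2[OF perms(2) Ieq(2)] g ind unfolding I_def indep3_def by auto
    next
      assume "g = c" then show P using a2[OF perms(1) Ieq(1)] g ind unfolding I_def indep3_def by auto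
    qed
  qed
  have one_cases: "P" if a1: "one s" and a2: "\<And>x y z. indep3 x y z \<Longrightarrow> I = {x,y,z} \<Longrightarrow> E s x \<Longrightarrow> \<not> E s y \<Longrightarrow> \<not> E s z \<Longrightarrow> P" for s P
  proof -
    obtain g where g: "g \<in> I" "\<forall>x\<in>I. E s x \<longleftrightarrow> x = g" using a1 unfolding one_def by blast
    have "g = a \<or> g = b \<or> g = c" using g(1) unfolding I_def by auto
    then show P
    proof (elim disjE)
      assume "g = a" then show P using a2[OF perms(1) Ieq(1)] g ind unfolding I_def indep3_def by auto
    next
      assume "g = b" then show P using a2[OF perms(4) Ieq(4)] g ind unfolding I_def indep3_def by auto
    next
      assume "g = c" then show P using a2[OF perms(5) Ieq(5)] g ind unfolding I_def indep3_def by auto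
    qed
  qed
  have two_L5: "E u s" if "two s" "T0 I z" "E s z" "T0 I u" "E z u" for s z u
    using that(1)
  proof (rule two_cases)
    fix x y w assume "indep3 x y w" "I = {x,y,w}" "E s x" "E s y" "\<not> E s w"
    then show "E u s" using L5 that by blast
  qed
  have two_L4: "\<not> E s f" if "two s" "T0 I z" "E s z" "f \<in> F" "\<not> E z f" for s z f
    using that(1)
  proof (rule two_cases)
    fix x y w assume "indep3 x y w" "I = {x,y,w}" "E s x" "E s y" "\<not> E s w"
    then show "\<not> E s f" using L4[of x y w I s z f] that unfolding F_def by blast
  qed
  have one_L2: "E z f" if "one y" "T0 I z" "E z y" "f \<in> F" for y z f
    using that(1)
  proof (rule one_cases)
    fix x x' w assume "indep3 x x' w" "I = {x,x',w}" "E y x" "\<not> E y x'" "\<not> E y w"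
    then show "E z f" using L2[of x x' w I f z y] that unfolding F_def by blast
  qed
  have common: "\<exists>x\<in>I. E s x \<and> E y x" if a1: "two s" and a2: "two y" for s y
  proof -
    obtain g where g: "g \<in> I" "\<forall>x\<in>I. E s x \<longleftrightarrow> x \<noteq> g" using a1 unfolding two_def by blast
    obtain h where h: "h \<in> I" "\<forall>x\<in>I. E y x \<longleftrightarrow> x \<noteq> h" using a2 unfolding two_def by blast
    have "\<exists>x\<in>I. x \<noteq> g \<and> x \<noteq> h" using ind unfolding I_def indep3_def by auto
    then show ?thesis using g h by blast
  qed
  have two_not_full: "s \<noteq> f" if "two s" "f \<in> F" for s f
    using that unfolding two_def F_def Full_def by auto
  have cross_class: "y \<in> T0r \<or> two y" if "u \<in> T0r" "y \<in> V" "E u y" for u y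
  proof -
    have u: "T0 I u" "\<forall>f\<in>F. \<not> E u f" using that(1) unfolding T0r_def by auto
    have "y \<notin> I" using u(1) that(3) unfolding T0_def by auto
    moreover have "\<not> one y" using one_L2[of y u v] u vF that(3) by auto
    moreover have "\<not> Full I y" using u(2) that(3) unfolding F_def by auto
    moreover have "y \<in> T0r" if "T0 I y"
    proof -
      have "\<not> E y f" if "f \<in> F" for f
      proof
        assume "E y f"
        then have "E u f" using L3[OF ind I_def _ _ \<open>E y f\<close> u(1)] \<open>f\<in>F\<close> \<open>T0 I y\<close> \<open>E u y\<close> symE
          unfolding F_def by blast
        then show False using u(2) \<open>f\<in>F\<close> by blast
      qed
      then show ?thesis using that unfolding T0r_def by auto
    qed
    ultimately show ?thesis using classify[OF that(2)] by blast
  qed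

  have FE: "E f a" "E f b" "E f c" "f \<in> V" if "f \<in> F" for f
    using that unfolding F_def Full_def I_def by auto
  have T0E: "\<not> E u a" "\<not> E u b" "\<not> E u c" "u \<in> V" "u \<noteq> a" "u \<noteq> b" "u \<noteq> c" if "T0 I u" for u
    using that unfolding T0_def I_def by auto
  have T0rE: "T0 I u" "\<forall>f\<in>F. \<not> E u f" if "u \<in> T0r" for u using that unfolding T0r_def by auto
  have T0FE: "T0 I u" "\<exists>f\<in>F. E u f" if "u \<in> T0F" for u using that unfolding T0F_def by auto
  have finT: "finite T0r" "finite T0F" using T0rV finV finite_subset by auto
  have twoI: "\<exists>x\<in>I. E s x" if a1: "two s" for s
  proof -
    obtain g where g: "g \<in> I" "\<forall>x\<in>I. E s x \<longleftrightarrow> x \<noteq> g" using a1 unfolding two_def by blast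
    have "\<exists>x\<in>I. x \<noteq> g" using dist unfolding I_def by auto
    then show ?thesis using g by blast
  qed
  have IE: "x \<in> V" "\<not> E u x" if "x \<in> I" "T0 I u" for x u
    using that aV unfolding I_def T0_def by auto
  have FI: "E f x" if "f \<in> F" "x \<in> I" for f x
    using that unfolding F_def Full_def by auto
  have aT: "a \<notin> T0r" unfolding T0r_def T0_def I_def by auto
  have S: "\<exists>s\<in>V. (\<forall>u\<in>T0r. E u s) \<and> (T0r \<noteq> {} \<longrightarrow> two s \<and> (\<exists>z\<in>T0r. E z s))"
  proof (cases "T0r = {}")
    case True then show ?thesis using aV by auto
  next
    case False
    then obtain z0 where z0: "z0 \<in> T0r" by auto
    show ?thesis
    proof (cases "\<exists>s. two s")
      case False
      from crossing[OF T0rV(1) z0 aV(1) aT] obtain u y where "u \<in> T0r" "y \<in> V" "y \<notin> T0r" "E u y" by blast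
      then have "two y" using cross_class by blast
      then show ?thesis using False by blast
    next
      case True
      then obtain s0 where "two s0" by blast
      have bnd: "\<forall>y. two y \<longrightarrow> card {z\<in>T0r. E z y} < Suc (card V)"
        using card_lt_V T0rV(1) by (metis (no_types, lifting) mem_Collect_eq subset_iff)
      obtain s where s: "two s" and smax: "\<forall>y. two y \<longrightarrow> card {z\<in>T0r. E z y} \<le> card {z\<in>T0r. E z s}"
        using Lattices_Big.ex_has_greatest_nat[of two s0 "\<lambda>y. card {z\<in>T0r. E z y}" "Suc (card V)", OF \<open>two s0\<close> bnd]
        by blast
      have sV: "s \<in> V" using s unfolding two_def by auto
      have sub: "\<forall>u\<in>T0r. E u s"
      proof (rule ccontr)
        assume "\<not> (\<forall>u\<in>T0r. E u s)"
        then obtain x where x: "x \<in> T0r" "\<not> E x s" by blast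
        define U where "U = T0r - {u. E u s}"
        have UV: "U \<subseteq> V" using T0rV unfolding U_def by auto
        have xU: "x \<in> U" using x unfolding U_def by auto
        have aU: "a \<notin> U" using aT unfolding U_def by auto
        from crossing[OF UV xU aV(1) aU] obtain u y where uy: "u \<in> U" "y \<in> V" "y \<notin> U" "E u y" by blast
        have u: "u \<in> T0r" "\<not> E u s" using uy(1) unfolding U_def by auto
        have "y \<in> T0r \<or> two y" using cross_class[OF u(1) uy(2,4)] .
        then show False
        proof
          assume yT: "y \<in> T0r"
          then have "E y s" using uy(3) unfolding U_def by auto
          then have "E u s" using two_L5[OF s T0rE(1)[OF yT] _ T0rE(1)[OF u(1)]] uy(4) symE by blast
          then show False using u by blast
        next
          assume y: "two y"
          have "y \<noteq> s" using u uy by auto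
          have "u \<in> {z\<in>T0r. E z y}" using u uy symE by auto
          then have "card {z\<in>T0r. E z y} \<ge> 1" using finT
            by (metis (no_types, lifting) One_nat_def Suc_leI card_gt_0_iff empty_iff finite_subset mem_Collect_eq subsetI)
          then have "card {z\<in>T0r. E z s} \<ge> 1" using smax y by force
          then obtain z1 where z1: "z1 \<in> T0r" "E z1 s"
            by (metis (no_types, lifting) One_nat_def card.empty empty_Collect_eq not_one_le_zero)
          have sF: "\<not> E s f" if "f \<in> F" for f
            using two_L4[OF s T0rE(1)[OF z1(1)] _ that] z1 T0rE(2)[OF z1(1)] that symE by blast
          have yF: "\<not> E y f" if "f \<in> F" for f
            using two_L4[OF y T0rE(1)[OF u(1)] _ that] uy(4) T0rE(2)[OF u(1)] that symE by blast
          obtain al where al: "al \<in> I" "E s al" "E y al" using common[OF s y] by blast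
          have ual: "\<not> E u al" using IE(2)[OF al(1) T0rE(1)[OF u(1)]] .
          have uv: "\<not> E u v" using T0rE(2)[OF u(1)] vF by blast
          show False
          proof (cases "E y s")
            case False
            show False
              by (rule no_chair[of al s v y u])
                (use al ual uv u uy False sF[OF vF] yF[OF vF] two_not_full[OF s vF] two_not_full[OF y vF]
                     \<open>y \<noteq> s\<close> FI[OF vF al(1)] in \<open>auto simp: symE\<close>)
          next
            case True
            have "\<exists>z2\<in>T0r. E z2 s \<and> \<not> E z2 y"
            proof (rule ccontr)
              assume "\<not> ?thesis"
              then have "{z\<in>T0r. E z s} \<subseteq> {z\<in>T0r. E z y}" by auto
              moreover have "u \<in> {z\<in>T0r. E z y} - {z\<in>T0r. E z s}" using u uy symE by auto
              ultimately have "{z\<in>T0r. E z s} \<subset> {z\<in>T0r. E z y}" by blast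
              then have "card {z\<in>T0r. E z s} < card {z\<in>T0r. E z y}"
                using psubset_card_mono[of "{z\<in>T0r. E z y}"] finT(1) by auto
              then show False using smax y by force
            qed
            then obtain z2 where z2: "z2 \<in> T0r" "E z2 s" "\<not> E z2 y" by blast
            have z2u: "\<not> E z2 u"
            proof
              assume "E z2 u"
              then have "E u s" using two_L5[OF s T0rE(1)[OF z2(1)] _ T0rE(1)[OF u(1)]] z2 symE by blast
              then show False using u by blast
            qed
            show False
              by (rule no_bull[of s y al z2 u])
                (use True al z2 z2u u uy ual IE(2)[OF al(1) T0rE(1)[OF z2(1)]] in \<open>auto simp: symE\<close>)
          qed
        qed
      qed
      show ?thesis using sV sub s z0 by blast
    qed
  qed

  obtain s where sV: "s \<in> V" and sdom: "\<forall>u\<in>T0r. E u s"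
    and sprop: "T0r \<noteq> {} \<Longrightarrow> two s \<and> (\<exists>z\<in>T0r. E z s)" using S by blast
  have bndF: "\<forall>g. g \<in> F \<longrightarrow> card {z\<in>T0F. E z g} < Suc (card V)"
    using card_lt_V T0rV(2) by (metis (no_types, lifting) mem_Collect_eq subset_iff)
  obtain f where fF: "f \<in> F" and fmax: "\<forall>g. g \<in> F \<longrightarrow> card {z\<in>T0F. E z g} \<le> card {z\<in>T0F. E z f}"
    using Lattices_Big.ex_has_greatest_nat[of "\<lambda>g. g \<in> F" v "\<lambda>g. card {z\<in>T0F. E z g}" "Suc (card V)", OF vF bndF]
    by blast
  have M: "\<not> E f g" if gF: "g \<in> F" and zT: "z \<in> T0F" and zg: "E z g" and zf: "\<not> E z f" for g z
  proof
    assume fg: "E f g"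
    have "\<exists>z0\<in>T0F. E z0 f \<and> \<not> E z0 g"
    proof (rule ccontr)
      assume "\<not> ?thesis"
      then have "{z\<in>T0F. E z f} \<subseteq> {z\<in>T0F. E z g}" by auto
      moreover have "z \<in> {z\<in>T0F. E z g} - {z\<in>T0F. E z f}" using zT zg zf by auto
      ultimately have "{z\<in>T0F. E z f} \<subset> {z\<in>T0F. E z g}" by blast
      then have "card {z\<in>T0F. E z f} < card {z\<in>T0F. E z g}"
        using psubset_card_mono[of "{z\<in>T0F. E z g}"] finT(2) by auto
      then show False using fmax gF by force
    qed
    then obtain z0 where z0: "z0 \<in> T0F" "E z0 f" "\<not> E z0 g" by blast
    show False
    proof (cases "E z0 z")
      case True
      have "E z f" using L3[OF ind I_def _ T0FE(1)[OF z0(1)] z0(2) T0FE(1)[OF zT] True] fF unfolding F_def by blast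
      then show False using zf by blast
    next
      case False
      show False
        by (rule no_bull[of f g a z0 z])
          (use fg False z0 zg zf FE[OF fF] FE[OF gF] T0E[OF T0FE(1)[OF zT]] T0E[OF T0FE(1)[OF z0(1)]] in \<open>auto simp: symE\<close>)
    qed
  qed
  have domI: "u \<in> {a,b,c} \<or> E u a \<or> E u b \<or> E u c \<or> u \<in> T0F \<or> u \<in> T0r" if "u \<in> V" for u
    using that unfolding T0F_def T0r_def T0_def I_def by auto
  have card5: "card {a,b,c,x,y} \<le> 5" for x y
  proof -
    have "card (set [a,b,c,x,y]) \<le> length [a,b,c,x,y]" by (rule card_length)
    then show ?thesis by simp
  qed
  show ?thesis
  proof (cases "\<forall>z\<in>T0F. E z f")
    case True
    show ?thesis
    proof (rule dom_lpt[of "{a,b,c,f,s}"])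
      show "{a,b,c,f,s} \<subseteq> V" using aV FE(4)[OF fF] sV by auto
      show "card {a,b,c,f,s} \<le> 5" by (rule card5)
      show "\<forall>u\<in>V. u \<in> {a,b,c,f,s} \<or> (\<exists>d\<in>{a,b,c,f,s}. E u d)"
        using domI True sdom by blast
    qed
  next
    case False
    then obtain z1 where z1: "z1 \<in> T0F" "\<not> E z1 f" by blast
    then obtain g where gF: "g \<in> F" "E z1 g" using T0FE(2) by blast
    have fg: "\<not> E f g" using M[OF gF(1) z1(1) gF(2) z1(2)] .
    have fneg: "f \<noteq> g" using z1 gF by auto
    have T0r_empty: "T0r = {}"
    proof (rule ccontr)
      assume ne: "T0r \<noteq> {}"
      then have st: "two s" and "\<exists>z\<in>T0r. E z s" using sprop by auto
      then obtain z where z: "z \<in> T0r" "E z s" by blast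
      have sF: "\<not> E s h" if "h \<in> F" for h
        using two_L4[OF st T0rE(1)[OF z(1)] _ that] z T0rE(2)[OF z(1)] that symE by blast
      obtain al where al: "al \<in> I" "E s al" using twoI[OF st] by blast
      show False
        by (rule no_chair[of al f g s z])
          (use al z fg fneg sF[OF fF] sF[OF gF(1)] two_not_full[OF st fF] two_not_full[OF st gF(1)]
             FI[OF fF al(1)] FI[OF gF(1) al(1)] IE(2)[OF al(1) T0rE(1)[OF z(1)]] T0rE(2)[OF z(1)] fF gF
           in \<open>auto simp: symE\<close>)
    qed
    have cov: "E z f \<or> E z g" if zT: "z \<in> T0F" for z
    proof (rule ccontr)
      assume nz: "\<not> (E z f \<or> E z g)"
      obtain h where h: "h \<in> F" "E z h" using T0FE(2)[OF zT] by blast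
      have hf: "h \<noteq> f" "h \<noteq> g" using h nz by auto
      have fh: "\<not> E f h" using M[OF h(1) zT h(2)] nz by blast
      have zE: "\<not> E z a" using T0E(1)[OF T0FE(1)[OF zT]] .
      show False
      proof (cases "E g h")
        case True
        show False
          by (rule no_bull[of a h g f z])
            (use True fh fg nz h zE FE[OF fF] FE[OF gF(1)] FE[OF h(1)] T0E[OF T0FE(1)[OF zT]] in \<open>auto simp: symE\<close>)
      next
        case False
        show False
          by (rule no_chair[of a f g h z])
            (use False fh fg nz h zE hf fneg FE[OF fF] FE[OF gF(1)] FE[OF h(1)] in \<open>auto simp: symE\<close>)
      qed
    qed
    show ?thesis
    proof (rule dom_lpt[of "{a,b,c,f,g}"])
      show "{a,b,c,f,g} \<subseteq> V" using aV FE(4)[OF fF] FE(4)[OF gF(1)] by auto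
      show "card {a,b,c,f,g} \<le> 5" by (rule card5)
      show "\<forall>u\<in>V. u \<in> {a,b,c,f,g} \<or> (\<exists>d\<in>{a,b,c,f,g}. E u d)"
        using domI cov T0r_empty by blast
    qed
  qed
qed
end

context bcg
begin

definition ipath where
  "ipath q \<longleftrightarrow> is_path V E q \<and> (\<forall>i<length q. \<forall>j<length q. E (q!i) (q!j) \<longrightarrow> i = Suc j \<or> j = Suc i)"

definition clawfree where
  "clawfree \<longleftrightarrow> (\<forall>c x y z. E c x \<and> E c y \<and> E c z \<and> x \<noteq> y \<and> x \<noteq> z \<and> y \<noteq> z \<longrightarrow> E x y \<or> E x z \<or> E y z)"

lemma ipath_rev:
  assumes "ipath q" shows "ipath (rev q)"
proof -
  have p: "q \<noteq> []" "distinct q" "set q \<subseteq> V" "walk E q" using assms unfolding ipath_def is_path_walk by auto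
  have "is_path V E (rev q)" unfolding is_path_walk using p walk_rev[OF sym] by auto
  moreover have "\<forall>i<length (rev q). \<forall>j<length (rev q). E (rev q!i) (rev q!j) \<longrightarrow> i = Suc j \<or> j = Suc i"
  proof (intro allI impI)
    fix i j assume ij: "i < length (rev q)" "j < length (rev q)" "E (rev q!i) (rev q!j)"
    then have "E (q ! (length q - Suc i)) (q ! (length q - Suc j))" by (simp add: rev_nth)
    then have "length q - Suc i = Suc (length q - Suc j) \<or> length q - Suc j = Suc (length q - Suc i)"
      using assms ij unfolding ipath_def by auto
    then show "i = Suc j \<or> j = Suc i" using ij by auto
  qed
  ultimately show ?thesis unfolding ipath_def by blast
qed

lemma ipath_Cons:
  assumes "ipath q" "x \<in> V" "x \<notin> set q" "E x (q!0)" "\<forall>k. 0 < k \<longrightarrow> k < length q \<longrightarrow> \<not> E x (q!k)"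
  shows "ipath (x # q)"
proof -
  have p: "q \<noteq> []" "distinct q" "set q \<subseteq> V" "walk E q" using assms(1) unfolding ipath_def is_path_walk by auto
  have "is_path V E (x # q)" unfolding is_path_walk using p assms by (auto simp: walk_Cons hd_conv_nth)
  moreover have "\<forall>i<length (x#q). \<forall>j<length (x#q). E ((x#q)!i) ((x#q)!j) \<longrightarrow> i = Suc j \<or> j = Suc i"
  proof (intro allI impI)
    fix i j assume ij: "i < length (x#q)" "j < length (x#q)" "E ((x#q)!i) ((x#q)!j)"
    show "i = Suc j \<or> j = Suc i"
    proof (cases i)
      case 0
      then show ?thesis
      proof (cases j)
        case 0 then show ?thesis using ij \<open>i = 0\<close> irr by auto
      next
        case (Suc j') then show ?thesis using ij \<open>i = 0\<close> assms(5) by (cases j') auto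
      qed
    next
      case (Suc i')
      then show ?thesis
      proof (cases j)
        case 0 then show ?thesis using ij \<open>i = Suc i'\<close> assms(5) sym by (cases i') auto
      next
        case (Suc j') then show ?thesis using ij \<open>i = Suc i'\<close> assms(1) unfolding ipath_def by auto
      qed
    qed
  qed
  ultimately show ?thesis unfolding ipath_def by blast
qed

lemma ipath_single: "x \<in> V \<Longrightarrow> ipath [x]"
  unfolding ipath_def is_path_def by (auto simp: irr)

lemma ipath_len: "ipath q \<Longrightarrow> length q \<le> card V"
  unfolding ipath_def is_path_def by (metis card_mono distinct_card finV)

lemma longest_ipath: "\<exists>q. ipath q \<and> (\<forall>q'. ipath q' \<longrightarrow> length q' \<le> length q)"
proof -
  obtain x where "x \<in> V" using Vne by blast
  then have "ipath [x]" by (rule ipath_single)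
  moreover have "\<forall>y. ipath y \<longrightarrow> length y < Suc (card V)" using ipath_len by (simp add: le_imp_less_Suc)
  ultimately show ?thesis using Lattices_Big.ex_has_greatest_nat[of ipath "[x]" length "Suc (card V)"] by blast
qed

end

locale cfq = bcg +
  fixes q :: "'a list"
  assumes cf: "bcg.clawfree E" and ip: "bcg.ipath V E q" and lng: "\<forall>q'. bcg.ipath V E q' \<longrightarrow> length q' \<le> length q"
begin

abbreviation "r \<equiv> length q"

lemma q_ne: "q \<noteq> []" using ip unfolding ipath_def is_path_def by auto
lemma r_pos: "0 < r" using q_ne by simp
lemma qV: "i < r \<Longrightarrow> q!i \<in> V" using ip unfolding ipath_def is_path_def by auto
lemma qE: "Suc i < r \<Longrightarrow> E (q!i) (q!Suc i)" using ip unfolding ipath_def is_path_def by auto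
lemma qE': "Suc i < r \<Longrightarrow> E (q!Suc i) (q!i)" using qE sym by blast
lemma qN: "i < r \<Longrightarrow> j < r \<Longrightarrow> i \<noteq> Suc j \<Longrightarrow> j \<noteq> Suc i \<Longrightarrow> \<not> E (q!i) (q!j)"
  using ip unfolding ipath_def by blast
lemma qD: "i < r \<Longrightarrow> j < r \<Longrightarrow> q!i = q!j \<longleftrightarrow> i = j"
  using ip unfolding ipath_def is_path_def by (simp add: nth_eq_iff_index_eq)
lemma q_set: "x \<in> set q \<longleftrightarrow> (\<exists>i<r. x = q!i)" by (auto simp: in_set_conv_nth)

lemma noclaw: "E c x \<Longrightarrow> E c y \<Longrightarrow> E c z \<Longrightarrow> x \<noteq> y \<Longrightarrow> x \<noteq> z \<Longrightarrow> y \<noteq> z \<Longrightarrow> \<not> E x y \<Longrightarrow> \<not> E x z \<Longrightarrow> \<not> E y z \<Longrightarrow> False"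
  using cf unfolding clawfree_def by blast

lemma ext1:
  assumes "ipath p" "x \<in> V" "x \<notin> set p" "E x (p!0)" "\<forall>k. 0 < k \<longrightarrow> k < length p \<longrightarrow> \<not> E x (p!k)"
    "length p = r"
  shows False
  using lng ipath_Cons[OF assms(1-5)] assms(6) by fastforce

lemma ext2:
  assumes "ipath p" "v \<in> V" "w \<in> V" "v \<notin> set p" "w \<notin> set p" "E v w" "E w (p!0)"
    "\<forall>k. 0 < k \<longrightarrow> k < length p \<longrightarrow> \<not> E w (p!k)" "\<forall>k<length p. \<not> E v (p!k)" "length p = r"
  shows False
proof -
  have "ipath (w # p)" using ipath_Cons[OF assms(1,3,5,7,8)] .
  moreover have "v \<notin> set (w # p)" using assms(4,6) irr by auto
  moreover have "\<forall>k. 0 < k \<longrightarrow> k < length (w#p) \<longrightarrow> \<not> E v ((w#p)!k)"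
    using assms(9) by (auto simp: nth_Cons split: nat.splits)
  ultimately have "ipath (v # w # p)" using ipath_Cons[of "w#p" v] assms(2,6) by auto
  then show False using lng assms(10) by fastforce
qed

lemma revq: "ipath (rev q)" "length (rev q) = r" "k < r \<Longrightarrow> rev q ! k = q ! (r - Suc k)" "set (rev q) = set q"
  using ipath_rev[OF ip] by (auto simp: rev_nth)

lemma dom: "u \<in> V \<Longrightarrow> u \<in> set q \<or> (\<exists>j<r. E u (q!j))"
proof (rule ccontr)
  assume uV: "u \<in> V" and nd: "\<not> (u \<in> set q \<or> (\<exists>j<r. E u (q!j)))"
  define U where "U = {u\<in>V. u \<notin> set q \<and> (\<forall>j<r. \<not> E u (q!j))}"
  have "U \<subseteq> V" "u \<in> U" "q!0 \<in> V" "q!0 \<notin> U" using uV nd qV[OF r_pos] r_pos unfolding U_def by auto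
  from crossing[OF this] obtain v w where vw: "v \<in> U" "w \<in> V" "w \<notin> U" "E v w" by blast
  have v: "v \<in> V" "v \<notin> set q" "\<forall>j<r. \<not> E v (q!j)" using vw(1) unfolding U_def by auto
  have wq: "w \<notin> set q"
  proof
    assume "w \<in> set q"
    then obtain i where "i < r" "w = q!i" by (auto simp: in_set_conv_nth)
    then show False using v(3) vw(4) by blast
  qed
  then have "\<exists>j<r. E w (q!j)" using vw(2,3) unfolding U_def by auto
  define j0 where "j0 = (LEAST j. j < r \<and> E w (q!j))"
  have j0: "j0 < r" "E w (q!j0)" using LeastI_ex[OF \<open>\<exists>j<r. E w (q!j)\<close>] unfolding j0_def by auto
  have j0min: "\<not> E w (q!k)" if "k < j0" for k
    using not_less_Least[of k "\<lambda>j. j < r \<and> E w (q!j)"] that j0(1) unfolding j0_def by auto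
  have vqj: "v \<noteq> q!j" if "j < r" for j using v(2) that by auto
  have vnq: "\<not> E (q!j) v" if "j < r" for j using v(3) that sym by blast
  have Da: "i = Suc j \<or> j = Suc i" if "i < r" "j < r" "E w (q!i)" "E w (q!j)" "i \<noteq> j" for i j
  proof (rule ccontr)
    assume a: "\<not> (i = Suc j \<or> j = Suc i)"
    have "\<not> E (q!i) (q!j)" using qN[OF that(1,2)] a by blast
    moreover have "q!i \<noteq> q!j" using qD[OF that(1,2)] that(5) by blast
    moreover have "v \<noteq> q!i" "v \<noteq> q!j" using vqj that by auto
    moreover have "E w v" using vw(4) sym by blast
    moreover have "\<not> E v (q!i)" "\<not> E v (q!j)" using v(3) that by auto
    ultimately show False using noclaw[of w v "q!i" "q!j"] that(3,4) by blast
  qed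
  show False
  proof (cases "Suc j0 < r \<and> E w (q!Suc j0)")
    case True
    show False
    proof (cases j0)
      case (Suc j1)
      have a1: "\<not> E (q!j1) w" using j0min[of j1] Suc sym by auto
      have a2: "E (q!j0) w" using j0(2) sym by blast
      have a3: "E (q!j0) (q!Suc j0)" using qE True by blast
      have a4: "E (q!j1) (q!j0)" using qE[of j1] Suc j0(1) by simp
      have a5: "\<not> E (q!j1) (q!Suc j0)" using qN[of j1 "Suc j0"] Suc True by simp
      show False
        by (rule no_bull[of "q!j0" w "q!Suc j0" "q!j1" v])
           (use a1 a2 a3 a4 a5 True vw(4) v(3) vnq[of j1] Suc j0(1) in auto)
    next
      case 0
      show False
      proof (cases "2 < r")
        case True2: True
        have w2: "\<not> E w (q!2)" using Da[of 0 2] True2 j0 0 by auto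
        have b1: "E (q!1) w" using True 0 sym by auto
        have b2: "E w (q!0)" using j0 0 by auto
        have b3: "E (q!1) (q!0)" using qE'[of 0] True2 by simp
        have b4: "E (q!2) (q!1)" using qE'[of 1] True2 by (simp add: numeral_2_eq_2)
        have b5: "\<not> E (q!2) w" using w2 sym by blast
        have b6: "\<not> E (q!2) (q!0)" using qN[of 2 0] True2 q_ne by simp
        show False
          by (rule no_bull[of "q!1" w "q!0" "q!2" v])
             (use b1 b2 b3 b4 b5 b6 vw(4) v(3)[rule_format, of 0] v(3)[rule_format, of 1] vnq[of 2] True2 q_ne in auto)
      next
        case False
        then have r2: "r = 2" using True 0 by auto
        have "ipath [q!0]" using ipath_single[OF qV[OF r_pos]] .
        then have "ipath [w, q!0]" using ipath_Cons[of "[q!0]" w] vw(2) wq j0 0 q_set r_pos by auto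
        moreover have "v \<notin> set [w, q!0]" using vw(4) irr v(2) q_set r_pos by auto
        ultimately have "ipath [v, w, q!0]" using ipath_Cons[of "[w, q!0]" v] v(1) vw(4) v(3) r_pos by auto
        then show False using lng r2 by fastforce
      qed
    qed
  next
    case False
    have only: "\<not> E w (q!k)" if "k < r" "k \<noteq> j0" for k
    proof
      assume wk: "E w (q!k)"
      show False
      proof (cases "k < j0")
        case True then show False using j0min wk by blast
      next
        case False
        then have "k = Suc j0" using Da[OF that(1) j0(1) wk j0(2) that(2)] that by auto
        then show False using \<open>\<not> (Suc j0 < r \<and> E w (q!Suc j0))\<close> wk that by auto
      qed
    qed
    show False
    proof (cases "j0 = 0")
      case True
      show False
        by (rule ext2[OF ip v(1) vw(2) v(2) wq vw(4)]) (use True j0 only v(3) in auto)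
    next
      case nz: False
      show False
      proof (cases "Suc j0 < r")
        case True
        obtain j1 where j1: "j0 = Suc j1" using nz by (cases j0) auto
        have c1: "E (q!j0) (q!j1)" using qE'[of j1] j1 j0(1) by simp
        have c2: "E (q!j0) (q!Suc j0)" using qE[of j0] True by simp
        have c3: "E (q!j0) w" using j0(2) sym by blast
        have c4: "\<not> E (q!j1) (q!Suc j0)" using qN[of j1 "Suc j0"] j1 True by simp
        have c5: "\<not> E (q!j1) w" using only[of j1] j1 j0(1) sym by auto
        have c6: "\<not> E (q!Suc j0) w" using only[of "Suc j0"] True sym by auto
        have c7: "q!j1 \<noteq> q!Suc j0" using qD[of j1 "Suc j0"] j1 True by simp
        have c8: "q!j1 \<noteq> w" "q!Suc j0 \<noteq> w" using wq j1 j0(1) True by (auto simp: in_set_conv_nth)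
        show False using noclaw[OF c1 c2 c3 c7 c8 c4 c5 c6] .
      next
        case False
        then have jr: "j0 = r - 1" using j0 by auto
        show False
        proof (rule ext2[OF revq(1) v(1) vw(2) _ _ vw(4)])
          show "v \<notin> set (rev q)" "w \<notin> set (rev q)" using v(2) wq by auto
          show "E w (rev q ! 0)" using revq(3)[OF r_pos] j0 jr by simp
          show "\<forall>k. 0 < k \<longrightarrow> k < length (rev q) \<longrightarrow> \<not> E w (rev q ! k)"
            using revq(2,3) only jr by auto
          show "\<forall>k<length (rev q). \<not> E v (rev q ! k)" using revq(2,3) v(3) by auto
          show "length (rev q) = r" by simp
        qed
      qed
    qed
  qed
qed

end

context cfq
begin

declare q_ne[simp]

definition idx where "idx v = (LEAST j. j < r \<and> E v (q!j))"

lemma idx_props: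
  assumes "v \<in> V" "v \<notin> set q"
  shows "idx v < r" "E v (q!idx v)" "\<And>k. k < idx v \<Longrightarrow> \<not> E v (q!k)"
proof -
  have ex: "\<exists>j<r. E v (q!j)" using dom[OF assms(1)] assms(2) by blast
  show "idx v < r" "E v (q!idx v)" using LeastI_ex[OF ex] unfolding idx_def by auto
  fix k assume "k < idx v"
  then show "\<not> E v (q!k)" using not_less_Least[of k "\<lambda>j. j < r \<and> E v (q!j)"] \<open>idx v < r\<close>
    unfolding idx_def by auto
qed

lemma N1:
  assumes "v \<in> V" "v \<notin> set q" "\<not> E v (q!0)"
  shows "0 < idx v" "Suc (idx v) < r" "E v (q!Suc (idx v))"
proof -
  note ip1 = idx_props[OF assms(1,2)]
  show pos: "0 < idx v" using ip1(2) assms(3) by (cases "idx v") auto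
  show lt: "Suc (idx v) < r"
  proof (rule ccontr)
    assume "\<not> Suc (idx v) < r"
    then have jr: "idx v = r - 1" using ip1(1) by auto
    show False
    proof (rule ext1[OF revq(1) assms(1)])
      show "v \<notin> set (rev q)" using assms(2) by simp
      show "E v (rev q ! 0)" using revq(3)[OF r_pos] ip1(2) jr by simp
      show "\<forall>k. 0 < k \<longrightarrow> k < length (rev q) \<longrightarrow> \<not> E v (rev q ! k)"
        using revq(2,3) ip1(3) jr by auto
      show "length (rev q) = r" by simp
    qed
  qed
  obtain j1 where j1: "idx v = Suc j1" using pos by (cases "idx v") auto
  show "E v (q!Suc (idx v))"
  proof (rule ccontr)
    assume n: "\<not> E v (q!Suc (idx v))"
    have c1: "E (q!idx v) (q!j1)" using qE'[of j1] j1 ip1(1) by simp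
    have c2: "E (q!idx v) (q!Suc (idx v))" using qE lt by blast
    have c3: "E (q!idx v) v" using ip1(2) sym by blast
    have c4: "\<not> E (q!j1) (q!Suc (idx v))" using qN[of j1 "Suc (idx v)"] j1 lt by simp
    have c5: "\<not> E (q!j1) v" using ip1(3)[of j1] j1 sym by auto
    have c6: "\<not> E (q!Suc (idx v)) v" using n sym by blast
    have c7: "q!j1 \<noteq> q!Suc (idx v)" using qD[of j1 "Suc (idx v)"] j1 lt by simp
    have c8: "q!j1 \<noteq> v" "q!Suc (idx v) \<noteq> v" using assms(2) j1 ip1(1) lt by (auto simp: in_set_conv_nth)
    show False using noclaw[OF c1 c2 c3 c7 c8 c4 c5 c6] .
  qed
qed

lemma N2:
  assumes "5 \<le> r" "v \<in> V" "v \<notin> set q" "E v (q!0)" "E v (q!1)" "E v (q!2)"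
  shows "\<not> E v (q!3)"
proof
  assume v3: "E v (q!3)"
  have vq: "v \<noteq> q!i" if "i < r" for i using assms(3) that by (auto simp: in_set_conv_nth)
  show False
  proof (cases "E v (q!4)")
    case True
    have d: "q!0 \<noteq> q!2" "q!0 \<noteq> q!4" "q!2 \<noteq> q!4" using qD[of 0 2] qD[of 0 4] qD[of 2 4] assms(1) by auto
    have n: "\<not> E (q!0) (q!2)" "\<not> E (q!0) (q!4)" "\<not> E (q!2) (q!4)"
      using qN[of 0 2] qN[of 0 4] qN[of 2 4] assms(1) by auto
    show False using noclaw[OF assms(4,6) True d n] .
  next
    case False
    have e: "E (q!3) v" "E (q!3) (q!2)" "E (q!4) (q!3)" "E (q!0) v"
      using v3 assms(4) sym qE'[of 2] qE'[of 3] assms(1) by (auto simp: numeral_3_eq_3 eval_nat_numeral)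
    have n: "\<not> E (q!4) v" "\<not> E (q!4) (q!2)" "\<not> E (q!0) (q!3)" "\<not> E (q!0) (q!2)" "\<not> E (q!4) (q!0)"
      using False sym qN[of 4 2] qN[of 0 3] qN[of 0 2] qN[of 4 0] assms(1) by auto
    show False
      by (rule no_bull[of "q!3" v "q!2" "q!4" "q!0"]) (use e n assms(6) in auto)
  qed
qed

lemma N3:
  assumes "5 \<le> r" "v \<in> V" "v \<notin> set q" "E v (q!0)" "E v (q!1)" "\<not> E v (q!2)"
  shows "\<not> E v (q!3)"
proof
  assume v3: "E v (q!3)"
  have vq: "v \<noteq> q!i" if "i < r" for i using assms(3) that by (auto simp: in_set_conv_nth)
  have v4: "E v (q!4)"
  proof (rule ccontr)
    assume n4: "\<not> E v (q!4)"
    have c1: "E (q!3) (q!2)" "E (q!3) (q!4)" "E (q!3) v"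
      using qE'[of 2] qE[of 3] v3 sym assms(1) by (auto simp: eval_nat_numeral)
    have c2: "q!2 \<noteq> q!4" "q!2 \<noteq> v" "q!4 \<noteq> v" using qD[of 2 4] vq[of 2] vq[of 4] assms(1) by auto
    have c3: "\<not> E (q!2) (q!4)" "\<not> E (q!2) v" "\<not> E (q!4) v" using qN[of 2 4] assms(1,6) n4 sym by auto
    show False using noclaw[OF c1 c2 c3] .
  qed
  have e: "E (q!1) v" "E v (q!0)" "E (q!1) (q!0)" "E (q!2) (q!1)" "E (q!4) v"
    using assms(4,5) v4 sym qE'[of 0] qE'[of 1] assms(1) by (auto simp: eval_nat_numeral)
  have n: "\<not> E (q!2) v" "\<not> E (q!2) (q!0)" "\<not> E (q!4) (q!1)" "\<not> E (q!4) (q!0)" "\<not> E (q!2) (q!4)"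
    using assms(6) sym qN[of 2 0] qN[of 4 1] qN[of 4 0] qN[of 2 4] assms(1) by auto
  show False
    by (rule no_bull[of "q!1" v "q!0" "q!2" "q!4"]) (use e n in auto)
qed


definition Wset where "Wset = {v\<in>V. v \<notin> set q \<and> E v (q!0) \<and> \<not> E v (q!1)}"
definition slot where "slot j = {v\<in>V. v \<notin> set q \<and> \<not> (E v (q!0) \<and> \<not> E v (q!1)) \<and> idx v = j}"

lemma vq_ne: "v \<notin> set q \<Longrightarrow> i < r \<Longrightarrow> v \<noteq> q!i" by (auto simp: in_set_conv_nth)

lemma slot_adj:
  assumes "5 \<le> r" "v \<in> slot j"
  shows "Suc j < r" "E v (q!j)" "E v (q!Suc j)" "0 < j \<Longrightarrow> \<not> E v (q!(j - 1))"
proof -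
  have v: "v \<in> V" "v \<notin> set q" "\<not> (E v (q!0) \<and> \<not> E v (q!1))" "idx v = j"
    using assms(2) unfolding slot_def by auto
  note ip1 = idx_props[OF v(1,2)]
  have "(Suc j < r \<and> E v (q!j) \<and> E v (q!Suc j)) \<and> (0 < j \<longrightarrow> \<not> E v (q!(j - 1)))"
  proof (cases "E v (q!0)")
    case True
    then have "idx v = 0" using ip1(3)[of 0] by (cases "idx v") auto
    then show ?thesis using True v assms(1) by auto
  next
    case False
    show ?thesis using N1[OF v(1,2) False] ip1 v(4) by auto
  qed
  then show "Suc j < r" "E v (q!j)" "E v (q!Suc j)" "0 < j \<Longrightarrow> \<not> E v (q!(j - 1))" by auto
qed

lemma slot_sub: "slot j \<subseteq> V" "x \<in> slot j \<Longrightarrow> x \<notin> set q" unfolding slot_def by auto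
lemma W_sub: "Wset \<subseteq> V" "x \<in> Wset \<Longrightarrow> x \<notin> set q" "x \<in> Wset \<Longrightarrow> E x (q!0)" unfolding Wset_def by auto
lemma slot_disj: "x \<in> slot i \<Longrightarrow> x \<in> slot j \<Longrightarrow> i = j" unfolding slot_def by auto
lemma W_slot: "x \<in> Wset \<Longrightarrow> x \<notin> slot j" unfolding slot_def Wset_def by auto

lemma slot_clique:
  assumes r5: "5 \<le> r" and x: "x \<in> slot j" and y: "y \<in> slot j" and xy: "x \<noteq> y"
  shows "E x y"
proof (rule ccontr)
  assume nxy: "\<not> E x y"
  have xV: "x \<in> V" "x \<notin> set q" and yV: "y \<in> V" "y \<notin> set q" using x y unfolding slot_def by auto
  have nyx: "\<not> E y x" using nxy sym by blast
  note ax = slot_adj[OF r5 x] and ay = slot_adj[OF r5 y]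
  show False
  proof (cases "j = 0")
    case True
    have x01: "E x (q!0)" "E x (q!1)" "E y (q!0)" "E y (q!1)" using ax ay True by auto
    have x3: "\<not> E x (q!3)" "\<not> E y (q!3)"
      using N2[OF r5 xV x01(1,2)] N3[OF r5 xV x01(1,2)] N2[OF r5 yV x01(3,4)] N3[OF r5 yV x01(3,4)] by blast+
    have d: "x \<noteq> q!i" "y \<noteq> q!i" if "i < r" for i using vq_ne xV(2) yV(2) that by auto
    have q12: "E (q!1) (q!2)" "E (q!2) (q!3)" "E (q!2) (q!1)" "E (q!3) (q!2)"
      using qE[of 1] qE[of 2] qE'[of 1] qE'[of 2] r5 by (auto simp: eval_nat_numeral)
    have q13: "\<not> E (q!3) (q!1)" using qN[of 3 1] r5 by auto
    show False
    proof (cases "E x (q!2)"; cases "E y (q!2)")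
      assume a: "E x (q!2)" "E y (q!2)"
      show False
        by (rule noclaw[of "q!2" "q!3" x y]) (use a q12 x3 nxy d[of 3] xy r5 sym in auto)
    next
      assume a: "\<not> E x (q!2)" "\<not> E y (q!2)"
      show False
        by (rule noclaw[of "q!1" "q!2" x y]) (use a q12 x01 nxy d[of 2] xy r5 sym in auto)
    next
      assume a: "E x (q!2)" "\<not> E y (q!2)"
      show False
        by (rule no_bull[of "q!1" "q!2" x y "q!3"]) (use a q12 q13 x01 x3 nxy nyx sym in auto)
    next
      assume a: "\<not> E x (q!2)" "E y (q!2)"
      show False
        by (rule no_bull[of "q!1" "q!2" y x "q!3"]) (use a q12 q13 x01 x3 nxy nyx sym in auto)
    qed
  next
    case False
    then obtain j1 where j1: "j = Suc j1" by (cases j) auto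
    have jr: "j < r" "j1 < r" using ax(1) j1 by auto
    have c: "E (q!j) (q!j1)" "E (q!j) x" "E (q!j) y" using qE'[of j1] j1 jr ax(2) ay(2) sym by auto
    have n: "\<not> E (q!j1) x" "\<not> E (q!j1) y" using ax(4) ay(4) j1 sym by auto
    have d: "q!j1 \<noteq> x" "q!j1 \<noteq> y" using vq_ne xV(2) yV(2) jr by metis+
    show False using noclaw[OF c d xy n nxy] .
  qed
qed

lemma W_clique:
  assumes r5: "5 \<le> r" and x: "x \<in> Wset" and y: "y \<in> Wset" and xy: "x \<noteq> y"
  shows "E x y"
proof (rule ccontr)
  assume nxy: "\<not> E x y"
  have a: "E (q!0) (q!1)" "E (q!0) x" "E (q!0) y" "\<not> E (q!1) x" "\<not> E (q!1) y"
    using x y qE[of 0] r5 sym unfolding Wset_def by auto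
  have d: "q!1 \<noteq> x" "q!1 \<noteq> y" using x y r5 vq_ne unfolding Wset_def by auto
  show False using noclaw[OF a(1,2,3) d xy a(4,5) nxy] .
qed


definition sl where "sl j = (SOME xs. set xs = slot j \<and> distinct xs)"
definition Wl where "Wl = (SOME xs. set xs = Wset \<and> distinct xs)"
definition blk where "blk j = q!j # sl j"
definition CC where "CC n = concat (map blk [0..<n])"

lemma sl: "set (sl j) = slot j" "distinct (sl j)"
proof -
  have "finite (slot j)" using slot_sub(1) finV finite_subset by blast
  then have "\<exists>xs. set xs = slot j \<and> distinct xs" using finite_distinct_list by blast
  then show "set (sl j) = slot j" "distinct (sl j)" unfolding sl_def using someI_ex by (metis (mono_tags, lifting))+
qed

lemma Wl: "set Wl = Wset" "distinct Wl"
proof -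
  have "finite Wset" using W_sub(1) finV finite_subset by blast
  then have "\<exists>xs. set xs = Wset \<and> distinct xs" using finite_distinct_list by blast
  then show "set Wl = Wset" "distinct Wl" unfolding Wl_def using someI_ex by (metis (mono_tags, lifting))+
qed

lemma blk_props:
  assumes r5: "5 \<le> r" and jr: "j < r"
  shows "set (blk j) = insert (q!j) (slot j)" "distinct (blk j)" "walk E (blk j)"
    "Suc j < r \<Longrightarrow> x \<in> set (blk j) \<Longrightarrow> E x (q!Suc j)" "hd (blk j) = q!j" "blk j \<noteq> []"
proof -
  show s: "set (blk j) = insert (q!j) (slot j)" unfolding blk_def using sl by auto
  have "q!j \<notin> slot j" using slot_sub(2)[of "q!j" j] jr by auto
  then show "distinct (blk j)" unfolding blk_def using sl by auto
  have "walk E (sl j)" using walk_clique[OF _ sl(2)] slot_clique[OF r5] sl(1) by blast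
  moreover have "E (q!j) (hd (sl j))" if "sl j \<noteq> []"
    using that slot_adj(2)[OF r5, of "hd (sl j)" j] sl(1) sym hd_in_set by blast
  ultimately show "walk E (blk j)" unfolding blk_def by (auto simp: walk_Cons)
  show "hd (blk j) = q!j" "blk j \<noteq> []" unfolding blk_def by auto
  assume sj: "Suc j < r" and x: "x \<in> set (blk j)"
  then show "E x (q!Suc j)" using s qE slot_adj(3)[OF r5] by auto
qed

lemma CC_Suc: "CC (Suc n) = CC n @ blk n" unfolding CC_def by simp

lemma CC_props:
  assumes r5: "5 \<le> r"
  shows "n \<le> r \<Longrightarrow> set (CC n) = (\<Union>j<n. insert (q!j) (slot j)) \<and> distinct (CC n) \<and> walk E (CC n)
    \<and> (0 < n \<longrightarrow> n < r \<longrightarrow> E (last (CC n)) (q!n))"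
proof (induction n)
  case 0
  then show ?case unfolding CC_def by simp
next
  case (Suc n)
  then have IH: "set (CC n) = (\<Union>j<n. insert (q!j) (slot j))" "distinct (CC n)" "walk E (CC n)"
    "0 < n \<Longrightarrow> n < r \<Longrightarrow> E (last (CC n)) (q!n)" and nr: "n < r" by auto
  note b = blk_props[OF r5 nr]
  have set': "set (CC (Suc n)) = (\<Union>j<Suc n. insert (q!j) (slot j))"
    using IH(1) b(1) unfolding CC_Suc by (auto simp: lessThan_Suc)
  have disj: "set (CC n) \<inter> set (blk n) = {}"
  proof (rule ccontr)
    assume "set (CC n) \<inter> set (blk n) \<noteq> {}"
    then obtain x j where x: "j < n" "x \<in> insert (q!j) (slot j)" "x \<in> insert (q!n) (slot n)"
      using IH(1) b(1) by blast
    have jr: "j < r" using x(1) nr by auto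
    show False
    proof (cases "x = q!j")
      case True
      show False
      proof (cases "x = q!n")
        case True2: True
        then show False using True x(1) qD[OF jr nr] by simp
      next
        case False
        then have "x \<in> slot n" using x(3) by simp
        moreover have "x \<in> set q" using True jr by simp
        ultimately show False using slot_sub(2) by blast
      qed
    next
      case False
      then have xs: "x \<in> slot j" using x(2) by auto
      show False
      proof (cases "x = q!n")
        case True
        then have "x \<in> set q" using nr by simp
        then show False using slot_sub(2)[OF xs] by blast
      next
        case False
        then have "x \<in> slot n" using x(3) by simp
        then show False using slot_disj[OF xs] x(1) by simp
      qed
    qed
  qed
  have dist': "distinct (CC (Suc n))" unfolding CC_Suc using IH(2) b(2) disj by simp
  have walk': "walk E (CC (Suc n))"
  proof (cases n)
    case 0
    then show ?thesis unfolding CC_Suc using b(3) by (simp add: CC_def)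
  next
    case (Suc m)
    then have "E (last (CC n)) (hd (blk n))" using IH(4) nr b(5) by simp
    then show ?thesis unfolding CC_Suc walk_append using IH(3) b(3) by simp
  qed
  have last': "E (last (CC (Suc n))) (q!Suc n)" if "Suc n < r"
  proof -
    have "last (CC (Suc n)) = last (blk n)" unfolding CC_Suc using b(6) by simp
    then show ?thesis using b(4)[OF that] b(6) last_in_set by metis
  qed
  show ?case using set' dist' walk' last' by blast
qed

lemma ham:
  assumes r5: "5 \<le> r"
  shows "is_path V E (Wl @ CC r)" "set (Wl @ CC r) = V"
proof -
  have C: "set (CC r) = (\<Union>j<r. insert (q!j) (slot j))" "distinct (CC r)" "walk E (CC r)"
    using CC_props[OF r5, of r] by auto
  have qsub: "set q \<subseteq> set (CC r)" using C(1) by (auto simp: in_set_conv_nth)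
  have setH: "set (Wl @ CC r) = V"
  proof
    show "set (Wl @ CC r) \<subseteq> V"
    proof
      fix x assume "x \<in> set (Wl @ CC r)"
      then have "x \<in> Wset \<or> (\<exists>j<r. x = q!j \<or> x \<in> slot j)" using Wl(1) C(1) by auto
      then show "x \<in> V" using W_sub(1) qV slot_sub(1) by blast
    qed
    show "V \<subseteq> set (Wl @ CC r)"
    proof
      fix v assume vV: "v \<in> V"
      show "v \<in> set (Wl @ CC r)"
      proof (cases "v \<in> set q")
        case True then show ?thesis using qsub by auto
      next
        case False
        show ?thesis
        proof (cases "E v (q!0) \<and> \<not> E v (q!1)")
          case True then show ?thesis using Wl(1) vV False unfolding Wset_def by auto
        next
          case nW: False
          have "v \<in> slot (idx v)" using vV False nW unfolding slot_def by auto
          moreover have "idx v < r" using idx_props(1)[OF vV False] .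
          ultimately show ?thesis using C(1) by auto
        qed
      qed
    qed
  qed
  have CCne: "CC r \<noteq> []" using C(1) r5 by (metis UN_iff empty_iff empty_set insertI1 lessThan_iff zero_less_iff_neq_zero r_pos)
  have hdC: "hd (CC r) = q!0"
  proof -
    have "CC r = blk 0 @ concat (map blk [Suc 0..<r])" unfolding CC_def using upt_conv_Cons[OF r_pos] by simp
    then show ?thesis using blk_props(5,6)[OF r5 r_pos] by simp
  qed
  have dis: "set Wl \<inter> set (CC r) = {}"
    using Wl(1) C(1) W_sub(2) W_slot by (auto simp: in_set_conv_nth)
  have wW: "walk E Wl" using walk_clique[OF _ Wl(2)] W_clique[OF r5] Wl(1) by blast
  have wH: "walk E (Wl @ CC r)"
    unfolding walk_append using wW C(3) CCne hdC W_sub(3) Wl(1) last_in_set by (metis)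
  show "is_path V E (Wl @ CC r)"
    unfolding is_path_walk using setH wH CCne Wl(2) C(2) dis by auto
  show "set (Wl @ CC r) = V" by (rule setH)
qed

end

context bcg
begin

lemma clawfree_case:
  assumes cf: "clawfree"
  shows "lpt V E \<le> 5"
proof -
  obtain q where ip: "ipath q" and lng: "\<forall>q'. ipath q' \<longrightarrow> length q' \<le> length q"
    using longest_ipath by blast
  interpret cfq V E q
    by (rule cfq.intro, rule bcg_axioms, unfold_locales) (use cf ip lng in auto)
  show ?thesis
  proof (cases "length q \<le> 5")
    case True
    show ?thesis
    proof (rule dom_lpt[of "set q"])
      show "set q \<subseteq> V" using ip unfolding ipath_def is_path_def by auto
      show "\<forall>u\<in>V. u \<in> set q \<or> (\<exists>d\<in>set q. E u d)"
      proof
        fix u assume "u \<in> V"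
        then have "u \<in> set q \<or> (\<exists>j<length q. E u (q!j))" by (rule dom)
        then show "u \<in> set q \<or> (\<exists>d\<in>set q. E u d)" using nth_mem by blast
      qed
      show "card (set q) \<le> 5" using card_length[of q] True by simp
    qed
  next
    case False
    then have "5 \<le> length q" by simp
    then show ?thesis using ham_lpt ham by blast
  qed
qed

end

theorem theorem3p9:
  fixes V :: "'a set" and E :: "'a \<Rightarrow> 'a \<Rightarrow> bool"
  assumes "simple_graph V E" and "connected_graph V E" and "bull_chair_free V E"
  shows "lpt V E \<le> 5"
proof -
  interpret bcg V E using assms by unfold_locales
  show ?thesis
  proof (cases clawfree)
    case True
    then show ?thesis by (rule clawfree_case)
  next
    case False
    then obtain c x y z where cl: "E c x" "E c y" "E c z" "x \<noteq> y" "x \<noteq> z" "y \<noteq> z"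
      "\<not> E x y" "\<not> E x z" "\<not> E y z"
      unfolding clawfree_def by blast
    have "indep3 x y z" unfolding indep3_def using cl inV2 by blast
    then show ?thesis using claw_case cl by blast
  qed
qed

end
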